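(* Let $G$ be a looped simple graph and let $T_1,T_2$ be disjoint transversals of $W(G)$ with $r(T_1)+r(T_2)=|V(G)|$, where $r$ is the rank function of $M[IAS(G)]$. Let $T_3=W(G)\setminus(T_1\cup T_2)$, and for $i\in\{1,2,3\}$ let $M_i$ be the binary matroid on $V(G)$ obtained from $M[IAS(G)]|T_i$ via the bijection $T_i\to V(G)$ sending the element of $T_i$ in the vertex triple of $v$ to $v$. Then $M_1$ and $M_2$ have the same bicycle space, and this bicycle space equals the cycle space of $M_3$.
   Context: A looped simple graph is a finite graph in which each vertex carries at most one loop and no two distinct vertices are joined by more than one edge; "adjacent" refers to distinct vertices joined by a non-loop edge. $A(G)$ is the $V(G)\times V(G)$ matrix over $GF(2)$ with diagonal entry $1$ exactly at looped vertices and off-diagonal entry $1$ exactly for adjacent pairs. $IAS(G)=(I\mid A(G)\mid A(G)+I)$ over $GF(2)$, rows indexed by $V(G)$; the $v$-columns of the three blocks are labelled $\phi_G(v),\chi_G(v),\psi_G(v)$. $M[IAS(G)]$ is the binary column matroid of $IAS(G)$ on $W(G)=\{\phi_G(v),\chi_G(v),\psi_G(v):v\in V(G)\}$; the vertex triple of $v$ is $\{\phi_G(v),\chi_G(v),\psi_G(v)\}$, and a transversal contains exactly one element of each vertex triple. For a binary matroid on a set $E$, identify subsets of $E$ with vectors in $GF(2)^E$: the cycle space is the span of the circuits (equivalently, for any $GF(2)$-representation, the set of vectors orthogonal to every row), the cocycle space is the span of the cocircuits (the orthogonal complement of the cycle space), and the bicycle space is the intersection of the cycle space and the cocycle space. 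*)

theory Defs
  imports Main "HOL-Library.Z2"
begin

text \<open>A looped simple graph on the finite vertex set V is given by a symmetric
relation E on V: for v \<noteq> w, E v w means v and w are adjacent; E v v means v is looped.\<close>

definition looped_simple_graph :: "'a set \<Rightarrow> ('a \<Rightarrow> 'a \<Rightarrow> bool) \<Rightarrow> bool" where
  "looped_simple_graph V E \<longleftrightarrow> finite V \<and> (\<forall>v\<in>V. \<forall>w\<in>V. E v w = E w v)"

definition adj_mat :: "('a \<Rightarrow> 'a \<Rightarrow> bool) \<Rightarrow> 'a \<Rightarrow> 'a \<Rightarrow> bit" where
  "adj_mat E v w = (if E v w then 1 else 0)"

datatype wkind = Phi | Chi | Psi

text \<open>W(G): phi_G(v) = (Phi, v), chi_G(v) = (Chi, v), psi_G(v) = (Psi, v).\<close>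
definition W :: "'a set \<Rightarrow> (wkind \<times> 'a) set" where
  "W V = UNIV \<times> V"

text \<open>Column of IAS(G) = (I | A(G) | A(G)+I) labelled by an element of W(G); rows indexed by V.\<close>
fun ias_col :: "('a \<Rightarrow> 'a \<Rightarrow> bool) \<Rightarrow> wkind \<times> 'a \<Rightarrow> 'a \<Rightarrow> bit" where
  "ias_col E (Phi, v) r = (if r = v then 1 else 0)"
| "ias_col E (Chi, v) r = adj_mat E r v"
| "ias_col E (Psi, v) r = adj_mat E r v + (if r = v then 1 else 0)"

definition transversal :: "'a set \<Rightarrow> (wkind \<times> 'a) set \<Rightarrow> bool" where
  "transversal V T \<longleftrightarrow> T \<subseteq> W V \<and> (\<forall>v\<in>V. \<exists>!k. (k, v) \<in> T)"

definition tv :: "(wkind \<times> 'a) set \<Rightarrow> 'a \<Rightarrow> wkind \<times> 'a" where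
  "tv T v = ((THE k. (k, v) \<in> T), v)"

definition bin_indep :: "'r set \<Rightarrow> ('e \<Rightarrow> 'r \<Rightarrow> bit) \<Rightarrow> 'e set \<Rightarrow> bool" where
  "bin_indep R col I \<longleftrightarrow> finite I \<and>
     (\<forall>J\<subseteq>I. J \<noteq> {} \<longrightarrow> \<not> (\<forall>r\<in>R. (\<Sum>x\<in>J. col x r) = 0))"

definition bin_rank :: "'r set \<Rightarrow> ('e \<Rightarrow> 'r \<Rightarrow> bit) \<Rightarrow> 'e set \<Rightarrow> nat" where
  "bin_rank R col S = Max {card I | I. I \<subseteq> S \<and> bin_indep R col I}"

text \<open>Cycle space (subsets of the ground set E identified with vectors in GF(2)^E):
  the vectors orthogonal to every row of the representation.\<close>
definition cycle_space :: "'r set \<Rightarrow> 'e set \<Rightarrow> ('e \<Rightarrow> 'r \<Rightarrow> bit) \<Rightarrow> 'e set set" where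
  "cycle_space R E col = {X. X \<subseteq> E \<and> (\<forall>r\<in>R. (\<Sum>x\<in>X. col x r) = 0)}"

definition cocycle_space :: "'r set \<Rightarrow> 'e set \<Rightarrow> ('e \<Rightarrow> 'r \<Rightarrow> bit) \<Rightarrow> 'e set set" where
  "cocycle_space R E col = {Y. Y \<subseteq> E \<and> (\<forall>X\<in>cycle_space R E col. even (card (X \<inter> Y)))}"

definition bicycle_space :: "'r set \<Rightarrow> 'e set \<Rightarrow> ('e \<Rightarrow> 'r \<Rightarrow> bit) \<Rightarrow> 'e set set" where
  "bicycle_space R E col = cycle_space R E col \<inter> cocycle_space R E col"

text \<open>M_i: the matroid on V obtained from M[IAS(G)]|T via v \<mapsto> element of T in the triple of v;
  its representation has rows V and column of v equal to the IAS column of tv T v.\<close>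
definition trans_col :: "('a \<Rightarrow> 'a \<Rightarrow> bool) \<Rightarrow> (wkind \<times> 'a) set \<Rightarrow> 'a \<Rightarrow> 'a \<Rightarrow> bit" where
  "trans_col E T v = ias_col E (tv T v)"

end

theory Submission imports Defs begin

declare add_bit_eq_xor[simp del] mult_bit_eq_and[simp del]

lemma bit_add_self [simp]: "(a::bit) + a = 0"
  by (metis mult_2 bit_2_eq_0 mult_zero_left)

lemma bit_cases2: "(x::bit) = 0 \<or> x = 1" using bit_not_zero_iff by blast

lemma bit_eq_iff_add: "((a::bit) = b) \<longleftrightarrow> a + b = 0"
  using bit_cases2[of a] bit_cases2[of b] by auto

lemma bit_sum_zero: "((x::bit) + y = 0) = (x = 0 \<longleftrightarrow> y = 0)"
  using bit_cases2[of x] bit_cases2[of y] by auto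

lemma bit_even_iff: "even n \<longleftrightarrow> (of_nat n :: bit) = 0"
  by (induction n) (auto simp: bit_sum_zero)

definition sd :: "'a set \<Rightarrow> 'a set \<Rightarrow> 'a set" where
  "sd A B = (A - B) \<union> (B - A)"

lemma sum_sd:
  assumes "finite A" "finite B"
  shows "sum (f::_\<Rightarrow>bit) (sd A B) = sum f A + sum f B"
proof -
  have 1: "sum f (sd A B) = sum f (A - B) + sum f (B - A)"
    unfolding sd_def using assms by (intro sum.union_disjoint) auto
  have 2: "sum f A = sum f (A \<inter> B) + sum f (A - B)" using assms(1) by (rule sum.Int_Diff)
  have 3: "sum f B = sum f (A \<inter> B) + sum f (B - A)" using sum.Int_Diff[OF assms(2), of f A]
    by (simp add: Int_commute)
  have 4: "\<And>a b c::bit. c + a + (c + b) = a + b"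
  proof -
    fix a b c :: bit
    have "c + a + (c + b) = (c + c) + (a + b)" by (simp only: add.assoc add.left_commute)
    also have "c + c = 0" by simp
    finally show "c + a + (c + b) = a + b" by simp
  qed
  show ?thesis unfolding 1 2 3 4 by (rule refl)
qed

lemma card_parity: "finite Z \<Longrightarrow> (of_nat (card (Z \<inter> Y)) :: bit) = (\<Sum>x\<in>Z. if x \<in> Y then 1 else 0)"
  by (simp add: sum.If_cases Int_def)

lemma parity_sd:
  assumes "finite A" "finite B"
  shows "even (card (sd A B \<inter> Y)) \<longleftrightarrow> (even (card (A \<inter> Y)) \<longleftrightarrow> even (card (B \<inter> Y)))"
proof -
  have f: "finite (sd A B)" using assms unfolding sd_def by auto
  have e: "(of_nat (card (sd A B \<inter> Y)) :: bit) = of_nat (card (A \<inter> Y)) + of_nat (card (B \<inter> Y))"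
    using assms f by (simp only: card_parity sum_sd)
  show ?thesis unfolding bit_even_iff e bit_sum_zero by (rule refl)
qed

lemma sd_sd: "sd (sd A B) B = A" unfolding sd_def by auto
lemma sd_self: "sd A A = {}" unfolding sd_def by auto

definition sv :: "'r set \<Rightarrow> ('e \<Rightarrow> 'r \<Rightarrow> bit) \<Rightarrow> 'e set \<Rightarrow> 'r \<Rightarrow> bit" where
  "sv R col X = (\<lambda>r. if r \<in> R then (\<Sum>x\<in>X. col x r) else 0)"

lemma sv_sd: "finite A \<Longrightarrow> finite B \<Longrightarrow> sv R col (sd A B) r = sv R col A r + sv R col B r"
  unfolding sv_def by (simp add: sum_sd)

lemma cycle_sv: "cycle_space R S col = {X. X \<subseteq> S \<and> sv R col X = (\<lambda>_. 0)}"
  unfolding cycle_space_def sv_def by (auto simp: fun_eq_iff)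


lemma sv_sd_fun: "finite A \<Longrightarrow> finite B \<Longrightarrow> sv R col (sd A B) = (\<lambda>r. sv R col A r + sv R col B r)"
  by (rule ext) (rule sv_sd)

lemma sd_empty_iff: "sd A B = {} \<longleftrightarrow> A = B" unfolding sd_def by auto

lemma sd_insert: "x \<notin> X \<Longrightarrow> insert x X = sd {x} X" unfolding sd_def by auto

lemma count_fibers:
  assumes "finite S"
  shows "card (Pow S) = card (cycle_space R S col) * card (sv R col ` Pow S)"
proof -
  let ?K = "cycle_space R S col" let ?f = "sv R col" let ?I = "?f ` Pow S"
  let ?F = "\<lambda>m. {X \<in> Pow S. ?f X = m}"
  have fib: "card (?F m) = card ?K" if "m \<in> ?I" for m
  proof -
    from that obtain X0 where X0a: "X0 \<in> Pow S" and X0b: "m = ?f X0" by (rule imageE)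
    then have X0: "X0 \<subseteq> S" "?f X0 = m" by auto
    have fX0: "finite X0" using X0 assms finite_subset by auto
    have "bij_betw (\<lambda>Z. sd Z X0) ?K (?F m)"
    proof (rule bij_betw_byWitness[where f'="\<lambda>Z. sd Z X0"])
      show "\<forall>a\<in>?K. sd (sd a X0) X0 = a" by (simp add: sd_sd)
      show "\<forall>a\<in>?F m. sd (sd a X0) X0 = a" by (simp add: sd_sd)
      show "(\<lambda>Z. sd Z X0) ` ?K \<subseteq> ?F m"
      proof
        fix Y assume "Y \<in> (\<lambda>Z. sd Z X0) ` ?K"
        then obtain Z where Z: "Z \<in> ?K" "Y = sd Z X0" by auto
        have ZS: "Z \<subseteq> S" and fZ: "?f Z = (\<lambda>_. 0)" using Z(1) unfolding cycle_sv by auto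
        have finZ: "finite Z" using ZS assms finite_subset by auto
        have "?f Y = m" unfolding Z(2) sv_sd_fun[OF finZ fX0] fZ X0(2) by simp
        moreover have "Y \<subseteq> S" using ZS X0(1) unfolding Z(2) sd_def by auto
        ultimately show "Y \<in> ?F m" by auto
      qed
      show "(\<lambda>Z. sd Z X0) ` ?F m \<subseteq> ?K"
      proof
        fix Y assume "Y \<in> (\<lambda>Z. sd Z X0) ` ?F m"
        then obtain Z where Z: "Z \<in> ?F m" "Y = sd Z X0" by auto
        have ZS: "Z \<subseteq> S" and fZ: "?f Z = m" using Z(1) by auto
        have finZ: "finite Z" using ZS assms finite_subset by auto
        have "?f Y = (\<lambda>_. 0)" unfolding Z(2) sv_sd_fun[OF finZ fX0] fZ X0(2)[symmetric] by simp
        moreover have "Y \<subseteq> S" using ZS X0(1) unfolding Z(2) sd_def by auto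
        ultimately show "Y \<in> ?K" unfolding cycle_sv by auto
      qed
    qed
    then show ?thesis by (rule bij_betw_same_card[symmetric])
  qed
  have eq: "Pow S = (\<Union>m\<in>?I. ?F m)" by auto
  have "card (\<Union>m\<in>?I. ?F m) = (\<Sum>m\<in>?I. card (?F m))"
    using assms by (intro card_UN_disjoint) auto
  then have "card (Pow S) = (\<Sum>m\<in>?I. card (?F m))" by (simp only: eq[symmetric])
  also have "\<dots> = (\<Sum>m\<in>?I. card ?K)" using fib by (rule sum.cong[OF refl])
  also have "\<dots> = card ?K * card ?I" by simp
  finally show ?thesis .
qed

lemma bin_indep_empty: "bin_indep R col {}" unfolding bin_indep_def by auto

lemma image_rank:
  assumes "finite S"
  shows "card (sv R col ` Pow S) = 2 ^ bin_rank R col S"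
proof -
  let ?f = "sv R col"
  let ?C = "{card I | I. I \<subseteq> S \<and> bin_indep R col I}"
  have finC: "finite ?C"
  proof (rule finite_subset[of _ "{0..card S}"])
    show "?C \<subseteq> {0..card S}" using assms card_mono by fastforce
  qed simp
  have neC: "?C \<noteq> {}" using bin_indep_empty by blast
  have "bin_rank R col S \<in> ?C" unfolding bin_rank_def using finC neC by (rule Max_in)
  then obtain I where I: "I \<subseteq> S" "bin_indep R col I" "card I = bin_rank R col S" by auto
  have maxI: "card I' \<le> card I" if "I' \<subseteq> S" "bin_indep R col I'" for I'
    unfolding I(3) bin_rank_def using finC that by (intro Max_ge) auto
  have finI: "finite I" using I(1) assms finite_subset by auto
  have zero_iff: "?f J = (\<lambda>_. 0) \<longleftrightarrow> (\<forall>r\<in>R. (\<Sum>x\<in>J. col x r) = 0)" for J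
    unfolding sv_def by (auto simp: fun_eq_iff)
  have inj: "inj_on ?f (Pow I)"
  proof (rule inj_onI)
    fix J1 J2 assume J: "J1 \<in> Pow I" "J2 \<in> Pow I" "?f J1 = ?f J2"
    have f1: "finite J1" "finite J2" using J finI finite_subset by auto
    have "?f (sd J1 J2) = (\<lambda>_. 0)" unfolding sv_sd_fun[OF f1] J(3) by simp
    moreover have "sd J1 J2 \<subseteq> I" using J unfolding sd_def by auto
    ultimately have "sd J1 J2 = {}" using I(2) unfolding bin_indep_def zero_iff by blast
    then show "J1 = J2" by (simp add: sd_empty_iff)
  qed
  have single: "\<exists>J\<subseteq>I. ?f J = ?f {x}" if "x \<in> S" for x
  proof (cases "x \<in> I")
    case True then show ?thesis by (intro exI[of _ "{x}"]) auto
  next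
    case False
    have "card (insert x I) = card I + 1" using False finI by simp
    then have "\<not> bin_indep R col (insert x I)" using maxI[of "insert x I"] I(1) that by auto
    then obtain J where J: "J \<subseteq> insert x I" "J \<noteq> {}" "\<forall>r\<in>R. (\<Sum>x\<in>J. col x r) = 0"
      using finI unfolding bin_indep_def by auto
    have "x \<in> J" using J I(2) unfolding bin_indep_def by blast
    let ?J = "J - {x}"
    have fJ: "finite ?J" using J(1) finI finite_subset by blast
    have Jeq: "sd {x} ?J = J" using \<open>x \<in> J\<close> unfolding sd_def by auto
    have z: "?f J = (\<lambda>_. 0)" using J(3) zero_iff by blast
    have "?f {x} r + ?f ?J r = 0" for r
    proof -
      have "?f (sd {x} ?J) r = ?f {x} r + ?f ?J r" using fJ by (intro sv_sd) auto
      then have "?f J r = ?f {x} r + ?f ?J r" unfolding Jeq .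
      moreover have "?f J r = 0" using z by (rule fun_cong)
      ultimately show ?thesis by simp
    qed
    then have "?f ?J = ?f {x}" using bit_eq_iff_add add.commute by (metis ext)
    moreover have "?J \<subseteq> I" using J(1) by auto
    ultimately show ?thesis by blast
  qed
  have img: "?f ` Pow I = ?f ` Pow S"
  proof
    show "?f ` Pow I \<subseteq> ?f ` Pow S" using I(1) by auto
    show "?f ` Pow S \<subseteq> ?f ` Pow I"
    proof
      fix m assume "m \<in> ?f ` Pow S"
      then obtain X where X: "X \<subseteq> S" "m = ?f X" by auto
      have "finite X" using X assms finite_subset by auto
      then have "\<exists>J\<subseteq>I. ?f J = ?f X" using X(1)
      proof (induction X rule: finite_subset_induct)
        case empty then show ?case by (intro exI[of _ "{}"]) auto
      next
        case (insert a F)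
        obtain J1 where J1: "J1 \<subseteq> I" "?f J1 = ?f {a}" using single insert by blast
        obtain J2 where J2: "J2 \<subseteq> I" "?f J2 = ?f F" using insert by blast
        have fJ: "finite J1" "finite J2" using J1 J2 finI finite_subset by auto
        have fa: "finite {a}" by simp
        have "?f (sd J1 J2) = ?f (insert a F)"
          unfolding sd_insert[OF insert(3)] sv_sd_fun[OF fJ] sv_sd_fun[OF fa insert(1)] J1 J2 by simp
        moreover have "sd J1 J2 \<subseteq> I" using J1 J2 unfolding sd_def by auto
        ultimately show ?case by blast
      qed
      then obtain J where "J \<subseteq> I" "?f J = ?f X" by blast
      then show "m \<in> ?f ` Pow I" using X by (metis PowI image_eqI)
    qed
  qed
  have "card (?f ` Pow I) = card (Pow I)" using inj by (rule card_image)
  also have "\<dots> = 2 ^ card I" using finI by (rule card_Pow)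
  finally show ?thesis using img I(3) by simp
qed

lemma rank_le: "finite S \<Longrightarrow> bin_rank R col S \<le> card S"
proof -
  assume fS: "finite S"
  let ?C = "{card I | I. I \<subseteq> S \<and> bin_indep R col I}"
  have finC: "finite ?C"
  proof (rule finite_subset[of _ "{0..card S}"])
    show "?C \<subseteq> {0..card S}" using fS card_mono by fastforce
  qed simp
  have neC: "?C \<noteq> {}" using bin_indep_empty by blast
  have "bin_rank R col S \<in> ?C" unfolding bin_rank_def using finC neC by (rule Max_in)
  then show ?thesis using fS card_mono by auto
qed

lemma cycle_card:
  assumes "finite S"
  shows "card (cycle_space R S col) * 2 ^ bin_rank R col S = 2 ^ card S"
  using count_fibers[OF assms, of R col] image_rank[OF assms, of R col] card_Pow[OF assms] by simp


definition chi :: "'a set \<Rightarrow> 'a set \<Rightarrow> int" where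
  "chi X Y = (-1) ^ card (X \<inter> Y)"

lemma chi_if: "chi X Y = (if even (card (X \<inter> Y)) then 1 else -1)"
  unfolding chi_def by (rule minus_one_power_iff)

lemma chi_sd: "finite A \<Longrightarrow> finite B \<Longrightarrow> chi (sd A B) Y = chi A Y * chi B Y"
  unfolding chi_if using parity_sd[of A B Y] by auto

lemma chi_comm: "chi X Y = chi Y X" unfolding chi_def by (simp add: Int_commute)

lemma sum_neg_zero:
  assumes "bij_betw h S S" "\<And>x. x \<in> S \<Longrightarrow> g (h x) = - (g x :: int)"
  shows "sum g S = 0"
proof -
  have "sum g S = sum (\<lambda>x. g (h x)) S" using sum.reindex_bij_betw[OF assms(1), of g] by simp
  also have "\<dots> = - sum g S" using assms(2) by (simp add: sum_negf)
  finally show ?thesis by simp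
qed

lemma perp_card:
  assumes fV: "finite V" and KV: "K \<subseteq> Pow V" and K0: "{} \<in> K"
    and Kc: "\<And>X Y. X \<in> K \<Longrightarrow> Y \<in> K \<Longrightarrow> sd X Y \<in> K"
  shows "card K * card {Y. Y \<subseteq> V \<and> (\<forall>X\<in>K. even (card (X \<inter> Y)))} = 2 ^ card V"
proof -
  define P where "P = {Y. Y \<subseteq> V \<and> (\<forall>X\<in>K. even (card (X \<inter> Y)))}"
  have finK: "finite K" using KV fV by (meson finite_Pow_iff finite_subset)
  have PV: "P \<subseteq> Pow V" unfolding P_def by auto
  have finX: "finite X" if "X \<in> K" for X using that KV fV by (meson PowD finite_subset subsetD)
  have i1: "(\<Sum>X\<in>K. chi X Y) = (if Y \<in> P then int (card K) else 0)" if YV: "Y \<subseteq> V" for Y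
  proof (cases "Y \<in> P")
    case True
    then have "chi X Y = 1" if "X \<in> K" for X using that unfolding chi_if P_def by auto
    then have "(\<Sum>X\<in>K. chi X Y) = (\<Sum>X\<in>K. 1)" by (rule sum.cong[OF refl])
    then show ?thesis using True by simp
  next
    case False
    then obtain X0 where X0: "X0 \<in> K" "odd (card (X0 \<inter> Y))" using YV unfolding P_def by auto
    have "(\<Sum>X\<in>K. chi X Y) = 0"
    proof (rule sum_neg_zero[where h="\<lambda>X. sd X X0"])
      show "bij_betw (\<lambda>X. sd X X0) K K"
        by (rule bij_betw_byWitness[where f'="\<lambda>X. sd X X0"]) (auto simp: sd_sd X0 Kc)
      show "chi (sd X X0) Y = - chi X Y" if "X \<in> K" for X
        using chi_sd[OF finX[OF that] finX[OF X0(1)], of Y] X0(2) unfolding chi_if[of X0] by simp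
    qed
    then show ?thesis using False by simp
  qed
  have i2: "(\<Sum>Y\<in>Pow V. chi X Y) = (if X = {} then 2 ^ card V else 0)" if XV: "X \<subseteq> V" for X
  proof (cases "X = {}")
    case True
    then have "(\<Sum>Y\<in>Pow V. chi X Y) = (\<Sum>Y\<in>Pow V. 1)" unfolding chi_def by simp
    then show ?thesis using True fV by (simp add: card_Pow)
  next
    case False
    then obtain x0 where x0: "x0 \<in> X" by auto
    have "(\<Sum>Y\<in>Pow V. chi X Y) = 0"
    proof (rule sum_neg_zero[where h="\<lambda>Y. sd Y {x0}"])
      show "bij_betw (\<lambda>Y. sd Y {x0}) (Pow V) (Pow V)"
        by (rule bij_betw_byWitness[where f'="\<lambda>Y. sd Y {x0}"])
           (use x0 XV in \<open>auto simp: sd_sd sd_def\<close>)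
      show "chi X (sd Y {x0}) = - chi X Y" if "Y \<in> Pow V" for Y
      proof -
        have fY: "finite Y" using that fV finite_subset by auto
        have "chi (sd Y {x0}) X = chi Y X * chi {x0} X" by (rule chi_sd[OF fY]) simp
        moreover have "chi {x0} X = -1" using x0 unfolding chi_def by simp
        ultimately show ?thesis by (simp add: chi_comm)
      qed
    qed
    then show ?thesis using False by simp
  qed
  have "(\<Sum>Y\<in>Pow V. \<Sum>X\<in>K. chi X Y) = (\<Sum>Y\<in>Pow V. if Y \<in> P then int (card K) else 0)"
    using i1 by (intro sum.cong) auto
  also have "\<dots> = (\<Sum>Y\<in>P. int (card K))"
  proof -
    have "{Y \<in> Pow V. Y \<in> P} = P" using PV by auto
    then show ?thesis using fV by (simp only: sum.inter_filter[symmetric] finite_Pow_iff)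
  qed
  also have "\<dots> = int (card K * card P)" by simp
  finally have e1: "(\<Sum>Y\<in>Pow V. \<Sum>X\<in>K. chi X Y) = int (card K * card P)" .
  have "(\<Sum>Y\<in>Pow V. \<Sum>X\<in>K. chi X Y) = (\<Sum>X\<in>K. \<Sum>Y\<in>Pow V. chi X Y)" by (rule sum.swap)
  also have "\<dots> = (\<Sum>X\<in>K. if X = {} then 2 ^ card V else 0)"
  proof (rule sum.cong[OF refl])
    fix X assume "X \<in> K" then have "X \<subseteq> V" using KV by auto
    then show "(\<Sum>Y\<in>Pow V. chi X Y) = (if X = {} then 2 ^ card V else 0)" by (rule i2)
  qed
  also have "\<dots> = 2 ^ card V" using finK K0 by (simp add: sum.delta[OF finK])
  finally have e2: "(\<Sum>Y\<in>Pow V. \<Sum>X\<in>K. chi X Y) = 2 ^ card V" .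
  have "int (card K * card P) = int (2 ^ card V)" unfolding e1[symmetric] e2 by simp
  then show ?thesis unfolding P_def by (simp only: of_nat_eq_iff)
qed


fun alpha :: "wkind \<Rightarrow> bit" where
  "alpha Phi = 1" | "alpha Chi = 0" | "alpha Psi = 1"

fun beta :: "wkind \<Rightarrow> bit" where
  "beta Phi = 0" | "beta Chi = 1" | "beta Psi = 1"

lemma ias_ab: "ias_col E (k, v) r = alpha k * (if r = v then 1 else 0) + beta k * adj_mat E r v"
  by (cases k) simp_all

lemma det_ab: "k \<noteq> k' \<Longrightarrow> alpha k * beta k' + beta k * alpha k' = 1"
  by (cases k; cases k') simp_all

lemma alpha3: "k1 \<noteq> k2 \<Longrightarrow> k1 \<noteq> k3 \<Longrightarrow> k2 \<noteq> k3 \<Longrightarrow> alpha k1 + alpha k2 + alpha k3 = 0"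
  by (cases k1; cases k2; cases k3) simp_all

lemma beta3: "k1 \<noteq> k2 \<Longrightarrow> k1 \<noteq> k3 \<Longrightarrow> k2 \<noteq> k3 \<Longrightarrow> beta k1 + beta k2 + beta k3 = 0"
  by (cases k1; cases k2; cases k3) simp_all

lemma ias3:
  assumes "k1 \<noteq> k2" "k1 \<noteq> k3" "k2 \<noteq> k3"
  shows "ias_col E (k3, v) r = ias_col E (k1, v) r + ias_col E (k2, v) r"
proof -
  have a: "alpha k3 = alpha k1 + alpha k2" using alpha3[OF assms] by (metis bit_eq_iff_add add.assoc)
  have b: "beta k3 = beta k1 + beta k2" using beta3[OF assms] by (metis bit_eq_iff_add add.assoc)
  show ?thesis unfolding ias_ab a b by (simp add: algebra_simps)
qed

lemma cyc_row:
  assumes fX: "finite X" and r: "r \<in> V" and X: "X \<in> cycle_space V V (\<lambda>v. ias_col E (k v, v))"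
  shows "(if r \<in> X then alpha (k r) else 0) = (\<Sum>x\<in>X. beta (k x) * adj_mat E r x)"
proof -
  have z: "(\<Sum>x\<in>X. ias_col E (k x, x) r) = 0" using X r unfolding cycle_space_def by auto
  have e1: "(\<Sum>x\<in>X. ias_col E (k x, x) r) = (\<Sum>x\<in>X. alpha (k x) * (if r = x then 1 else 0)) + (\<Sum>x\<in>X. beta (k x) * adj_mat E r x)"
    by (simp add: ias_ab sum.distrib)
  have e2: "alpha (k x) * (if r = x then 1 else 0) = (if r = x then alpha (k x) else 0)" for x by simp
  have e3: "(\<Sum>x\<in>X. alpha (k x) * (if r = x then 1 else 0)) = (if r \<in> X then alpha (k r) else 0)"
    unfolding e2 using fX by simp
  have "(if r \<in> X then alpha (k r) else 0) + (\<Sum>x\<in>X. beta (k x) * adj_mat E r x) = 0"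
    using z unfolding e1 e3 .
  then show ?thesis by (subst bit_eq_iff_add)
qed

lemma ortho:
  assumes fV: "finite V" and sym: "\<forall>v\<in>V. \<forall>w\<in>V. E v w = E w v"
    and kd: "\<forall>v\<in>V. k1 v \<noteq> k2 v"
    and X: "X \<in> cycle_space V V (\<lambda>v. ias_col E (k1 v, v))"
    and Y: "Y \<in> cycle_space V V (\<lambda>v. ias_col E (k2 v, v))"
  shows "even (card (X \<inter> Y))"
proof -
  have XV: "X \<subseteq> V" and YV: "Y \<subseteq> V" using X Y unfolding cycle_space_def by auto
  have fX: "finite X" and fY: "finite Y" using XV YV fV finite_subset by auto
  let ?a1 = "\<lambda>v. alpha (k1 v)" let ?b1 = "\<lambda>v. beta (k1 v)"
  let ?a2 = "\<lambda>v. alpha (k2 v)" let ?b2 = "\<lambda>v. beta (k2 v)"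
  let ?A = "adj_mat E"
  have symA: "?A v w = ?A w v" if "v \<in> V" "w \<in> V" for v w
    using sym that unfolding adj_mat_def by auto
  have "(of_nat (card (X \<inter> Y)) :: bit) = (\<Sum>v\<in>X \<inter> Y. 1)" by simp
  also have "\<dots> = (\<Sum>v\<in>X \<inter> Y. ?a1 v * ?b2 v + ?b1 v * ?a2 v)"
    using kd XV by (intro sum.cong refl det_ab[symmetric]) auto
  also have "\<dots> = (\<Sum>v\<in>Y \<inter> X. ?b2 v * ?a1 v) + (\<Sum>v\<in>X \<inter> Y. ?b1 v * ?a2 v)"
    by (simp add: sum.distrib Int_commute mult.commute)
  also have "(\<Sum>v\<in>Y \<inter> X. ?b2 v * ?a1 v) = (\<Sum>v\<in>Y. ?b2 v * (if v \<in> X then ?a1 v else 0))"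
  proof -
    have "(\<Sum>v\<in>Y \<inter> X. ?b2 v * ?a1 v) = (\<Sum>v\<in>Y. if v \<in> X then ?b2 v * ?a1 v else 0)"
      using fY by (rule sum.inter_restrict)
    also have "\<dots> = (\<Sum>v\<in>Y. ?b2 v * (if v \<in> X then ?a1 v else 0))" by (intro sum.cong) auto
    finally show ?thesis .
  qed
  also have "\<dots> = (\<Sum>v\<in>Y. ?b2 v * (\<Sum>x\<in>X. ?b1 x * ?A v x))"
  proof (rule sum.cong[OF refl])
    fix v assume "v \<in> Y" then have "v \<in> V" using YV by auto
    show "?b2 v * (if v \<in> X then ?a1 v else 0) = ?b2 v * (\<Sum>x\<in>X. ?b1 x * ?A v x)"
      using cyc_row[OF fX \<open>v \<in> V\<close> X] by (rule arg_cong)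
  qed
  also have "\<dots> = (\<Sum>v\<in>Y. \<Sum>x\<in>X. ?b1 x * ?b2 v * ?A v x)"
    by (simp add: sum_distrib_left algebra_simps)
  also have "(\<Sum>v\<in>X \<inter> Y. ?b1 v * ?a2 v) = (\<Sum>v\<in>X. ?b1 v * (if v \<in> Y then ?a2 v else 0))"
  proof -
    have "(\<Sum>v\<in>X \<inter> Y. ?b1 v * ?a2 v) = (\<Sum>v\<in>X. if v \<in> Y then ?b1 v * ?a2 v else 0)"
      using fX by (rule sum.inter_restrict)
    also have "\<dots> = (\<Sum>v\<in>X. ?b1 v * (if v \<in> Y then ?a2 v else 0))" by (intro sum.cong) auto
    finally show ?thesis .
  qed
  also have "\<dots> = (\<Sum>v\<in>X. ?b1 v * (\<Sum>y\<in>Y. ?b2 y * ?A v y))"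
  proof (rule sum.cong[OF refl])
    fix v assume "v \<in> X" then have "v \<in> V" using XV by auto
    show "?b1 v * (if v \<in> Y then ?a2 v else 0) = ?b1 v * (\<Sum>y\<in>Y. ?b2 y * ?A v y)"
      using cyc_row[OF fY \<open>v \<in> V\<close> Y] by (rule arg_cong)
  qed
  also have "\<dots> = (\<Sum>v\<in>X. \<Sum>y\<in>Y. ?b1 v * ?b2 y * ?A v y)"
    by (simp add: sum_distrib_left algebra_simps)
  also have "\<dots> = (\<Sum>y\<in>Y. \<Sum>v\<in>X. ?b1 v * ?b2 y * ?A v y)" by (rule sum.swap)
  also have "\<dots> = (\<Sum>v\<in>Y. \<Sum>x\<in>X. ?b1 x * ?b2 v * ?A v x)"
  proof (rule sum.cong[OF refl], rule sum.cong[OF refl])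
    fix y x assume "y \<in> Y" "x \<in> X"
    then show "?b1 x * ?b2 y * ?A x y = ?b1 x * ?b2 y * ?A y x" using symA XV YV by auto
  qed
  finally have "(of_nat (card (X \<inter> Y)) :: bit) = 0" by simp
  then show ?thesis by (simp add: bit_even_iff)
qed


lemma rank_transfer:
  assumes h: "bij_betw h S T"
  shows "bin_rank R col T = bin_rank R (\<lambda>x. col (h x)) S"
proof -
  have inj: "inj_on h S" using h by (rule bij_betw_imp_inj_on)
  have img: "h ` S = T" using h by (rule bij_betw_imp_surj_on)
  have ind: "bin_indep R col (h ` I) \<longleftrightarrow> bin_indep R (\<lambda>x. col (h x)) I" if IS: "I \<subseteq> S" for I
  proof -
    have injI: "inj_on h I" using inj IS inj_on_subset by blast
    have fin: "finite (h ` I) \<longleftrightarrow> finite I" using injI finite_image_iff by blast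
    have sums: "(\<Sum>x\<in>h ` J. col x r) = (\<Sum>x\<in>J. col (h x) r)" if "J \<subseteq> I" for J r
      using sum.reindex[OF inj_on_subset[OF injI that], of "\<lambda>x. col x r"] by simp
    have "(\<forall>J\<subseteq>h ` I. J \<noteq> {} \<longrightarrow> \<not> (\<forall>r\<in>R. (\<Sum>x\<in>J. col x r) = 0)) \<longleftrightarrow>
          (\<forall>J\<subseteq>I. J \<noteq> {} \<longrightarrow> \<not> (\<forall>r\<in>R. (\<Sum>x\<in>J. col (h x) r) = 0))"
    proof
      assume a: "\<forall>J\<subseteq>h ` I. J \<noteq> {} \<longrightarrow> \<not> (\<forall>r\<in>R. (\<Sum>x\<in>J. col x r) = 0)"
      show "\<forall>J\<subseteq>I. J \<noteq> {} \<longrightarrow> \<not> (\<forall>r\<in>R. (\<Sum>x\<in>J. col (h x) r) = 0)"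
      proof (intro allI impI)
        fix J assume J: "J \<subseteq> I" "J \<noteq> {}"
        have "h ` J \<subseteq> h ` I" "h ` J \<noteq> {}" using J by auto
        then show "\<not> (\<forall>r\<in>R. (\<Sum>x\<in>J. col (h x) r) = 0)" using a sums[OF J(1)] by metis
      qed
    next
      assume a: "\<forall>J\<subseteq>I. J \<noteq> {} \<longrightarrow> \<not> (\<forall>r\<in>R. (\<Sum>x\<in>J. col (h x) r) = 0)"
      show "\<forall>J\<subseteq>h ` I. J \<noteq> {} \<longrightarrow> \<not> (\<forall>r\<in>R. (\<Sum>x\<in>J. col x r) = 0)"
      proof (intro allI impI)
        fix J assume J: "J \<subseteq> h ` I" "J \<noteq> {}"
        then obtain J' where J': "J' \<subseteq> I" "J = h ` J'" by (auto simp: subset_image_iff)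
        then have "J' \<noteq> {}" using J by auto
        then show "\<not> (\<forall>r\<in>R. (\<Sum>x\<in>J. col x r) = 0)" using a J' sums[OF J'(1)] by metis
      qed
    qed
    then show ?thesis unfolding bin_indep_def fin by blast
  qed
  have "{card I | I. I \<subseteq> T \<and> bin_indep R col I} = {card I | I. I \<subseteq> S \<and> bin_indep R (\<lambda>x. col (h x)) I}"
  proof (intro equalityI subsetI)
    fix c assume "c \<in> {card I | I. I \<subseteq> T \<and> bin_indep R col I}"
    then obtain I where I: "c = card I" "I \<subseteq> T" "bin_indep R col I" by auto
    then obtain I' where I': "I' \<subseteq> S" "I = h ` I'" using img by (auto simp: subset_image_iff)
    have "card I = card I'" using I' inj by (metis card_image inj_on_subset)
    then show "c \<in> {card I | I. I \<subseteq> S \<and> bin_indep R (\<lambda>x. col (h x)) I}"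
      using I I' ind[OF I'(1)] by auto
  next
    fix c assume "c \<in> {card I | I. I \<subseteq> S \<and> bin_indep R (\<lambda>x. col (h x)) I}"
    then obtain I where I: "c = card I" "I \<subseteq> S" "bin_indep R (\<lambda>x. col (h x)) I" by auto
    have "card (h ` I) = card I" using I inj by (metis card_image inj_on_subset)
    moreover have "h ` I \<subseteq> T" using I img by auto
    ultimately show "c \<in> {card I | I. I \<subseteq> T \<and> bin_indep R col I}"
      using I ind[OF I(2)] by (metis (mono_tags, lifting) mem_Collect_eq)
  qed
  then show ?thesis unfolding bin_rank_def by simp
qed

definition kd :: "(wkind \<times> 'a) set \<Rightarrow> 'a \<Rightarrow> wkind" where
  "kd T v = (THE k. (k, v) \<in> T)"

lemma kd_in: assumes "transversal V T" "v \<in> V" shows "(kd T v, v) \<in> T"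
proof -
  have "\<exists>!k. (k, v) \<in> T" using assms unfolding transversal_def by auto
  then show ?thesis unfolding kd_def by (rule theI')
qed

lemma kd_unique: assumes "transversal V T" "(k, v) \<in> T" shows "k = kd T v"
proof -
  have "v \<in> V" using assms unfolding transversal_def W_def by auto
  then have "\<exists>!k. (k, v) \<in> T" using assms unfolding transversal_def by auto
  then show ?thesis unfolding kd_def using assms(2) by (rule the1_equality[symmetric])
qed

lemma tv_kd: "tv T v = (kd T v, v)" unfolding tv_def kd_def by simp

lemma tv_bij: assumes "transversal V T" shows "bij_betw (tv T) V T"
proof -
  have "inj_on (tv T) V" unfolding tv_kd by (rule inj_onI) auto
  moreover have "tv T ` V = T"
  proof
    show "tv T ` V \<subseteq> T" unfolding tv_kd using kd_in[OF assms] by auto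
    show "T \<subseteq> tv T ` V"
    proof
      fix p assume p: "p \<in> T"
      obtain k v where kv: "p = (k, v)" by (cases p)
      have "v \<in> V" using assms p kv unfolding transversal_def W_def by auto
      moreover have "k = kd T v" using kd_unique[OF assms] p kv by simp
      ultimately show "p \<in> tv T ` V" unfolding tv_kd kv by auto
    qed
  qed
  ultimately show ?thesis unfolding bij_betw_def by simp
qed

lemma trans_col_kd: "trans_col E T = (\<lambda>v. ias_col E (kd T v, v))"
  by (rule ext) (simp add: trans_col_def tv_kd)

lemma rank_trans: "transversal V T \<Longrightarrow> bin_rank V (ias_col E) T = bin_rank V (trans_col E T) V"
  using rank_transfer[OF tv_bij, of V T V "ias_col E"] unfolding trans_col_def[abs_def] by simp

lemma third_kind: "(k1::wkind) \<noteq> k2 \<Longrightarrow> \<exists>!k. k \<noteq> k1 \<and> k \<noteq> k2"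
  apply (cases k1; cases k2)
  apply (simp_all add: Ex1_def)
  apply (metis wkind.exhaust wkind.distinct)+
  done

lemma cyc_sub: "K \<in> cycle_space R S col \<Longrightarrow> K \<subseteq> S" unfolding cycle_space_def by auto

lemma cyc_props:
  assumes fS: "finite S"
  shows "cycle_space R S col \<subseteq> Pow S" "{} \<in> cycle_space R S col"
    "\<And>X Y. X \<in> cycle_space R S col \<Longrightarrow> Y \<in> cycle_space R S col \<Longrightarrow> sd X Y \<in> cycle_space R S col"
proof -
  show "cycle_space R S col \<subseteq> Pow S" unfolding cycle_space_def by auto
  show "{} \<in> cycle_space R S col" unfolding cycle_space_def by auto
  fix X Y assume X: "X \<in> cycle_space R S col" and Y: "Y \<in> cycle_space R S col"
  have f: "finite X" "finite Y" using X Y fS unfolding cycle_space_def by (auto intro: finite_subset)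
  have z: "sv R col X = (\<lambda>_. 0)" "sv R col Y = (\<lambda>_. 0)" and s: "X \<subseteq> S" "Y \<subseteq> S"
    using X Y unfolding cycle_sv by auto
  have "sv R col (sd X Y) = (\<lambda>_. 0)" unfolding sv_sd_fun[OF f] z by simp
  moreover have "sd X Y \<subseteq> S" using s unfolding sd_def by auto
  ultimately show "sd X Y \<in> cycle_space R S col" unfolding cycle_sv by auto
qed


lemma perp_eq:
  assumes fV: "finite V" and sub: "K2 \<subseteq> cocycle_space V V c1"
    and c1: "card (cycle_space V V c1) * 2 ^ r1 = 2 ^ card V"
    and c2: "card K2 * 2 ^ r2 = 2 ^ card V" and r: "r1 + r2 = card V"
  shows "K2 = cocycle_space V V c1"
proof -
  let ?K1 = "cycle_space V V c1" let ?P1 = "cocycle_space V V c1"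
  have pc: "card ?K1 * card ?P1 = 2 ^ card V"
    unfolding cocycle_space_def using cyc_props[OF fV, where R=V and col=c1] fV by (intro perp_card) auto
  have "card ?K1 > 0"
    using cyc_props[OF fV, where R=V and col=c1] fV by (metis card_0_eq empty_iff finite_Pow_iff finite_subset gr0I)
  then have P1: "card ?P1 = 2 ^ r1" using pc c1 by (metis mult_left_cancel less_not_refl2)
  have "(2::nat) ^ card V = 2 ^ r1 * 2 ^ r2" unfolding r[symmetric] by (rule power_add)
  then have "card K2 * 2 ^ r2 = 2 ^ r1 * 2 ^ r2" using c2 by simp
  then have K2: "card K2 = 2 ^ r1" by simp
  have finP: "finite ?P1" unfolding cocycle_space_def using fV
    by (metis (no_types, lifting) Collect_subset PowI finite_Pow_iff finite_subset mem_Collect_eq subsetI)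
  show ?thesis using card_subset_eq[OF finP sub] P1 K2 by simp
qed

theorem corollary5p4:
  fixes V :: "'a set" and E :: "'a \<Rightarrow> 'a \<Rightarrow> bool" and T1 T2 :: "(wkind \<times> 'a) set"
  assumes "looped_simple_graph V E"
    and "transversal V T1" and "transversal V T2" and "T1 \<inter> T2 = {}"
    and "bin_rank V (ias_col E) T1 + bin_rank V (ias_col E) T2 = card V"
  shows "let T3 = W V - (T1 \<union> T2) in
     bicycle_space V V (trans_col E T1) = bicycle_space V V (trans_col E T2) \<and>
     bicycle_space V V (trans_col E T1) = cycle_space V V (trans_col E T3)"
proof -
  define T3 where "T3 = W V - (T1 \<union> T2)"
  have fV: "finite V" and sym: "\<forall>v\<in>V. \<forall>w\<in>V. E v w = E w v"
    using assms(1) unfolding looped_simple_graph_def by auto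
  have tr1: "transversal V T1" and tr2: "transversal V T2" using assms by auto
  have d12: "kd T1 v \<noteq> kd T2 v" if "v \<in> V" for v
    using kd_in[OF tr1 that] kd_in[OF tr2 that] assms(4) by auto
  have T3mem: "(k, v) \<in> T3 \<longleftrightarrow> v \<in> V \<and> k \<noteq> kd T1 v \<and> k \<noteq> kd T2 v" for k v
  proof
    assume a: "(k, v) \<in> T3"
    then have v: "v \<in> V" unfolding T3_def W_def by auto
    moreover have "k \<noteq> kd T1 v" using a kd_in[OF tr1 v] unfolding T3_def by auto
    moreover have "k \<noteq> kd T2 v" using a kd_in[OF tr2 v] unfolding T3_def by auto
    ultimately show "v \<in> V \<and> k \<noteq> kd T1 v \<and> k \<noteq> kd T2 v" by blast
  next
    assume a: "v \<in> V \<and> k \<noteq> kd T1 v \<and> k \<noteq> kd T2 v"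
    then have "(k, v) \<notin> T1" "(k, v) \<notin> T2" using kd_unique[OF tr1] kd_unique[OF tr2] by blast+
    then show "(k, v) \<in> T3" using a unfolding T3_def W_def by auto
  qed
  have tr3: "transversal V T3"
    unfolding transversal_def
  proof
    show "T3 \<subseteq> W V" unfolding T3_def by auto
    show "\<forall>v\<in>V. \<exists>!k. (k, v) \<in> T3"
    proof
      fix v assume v: "v \<in> V"
      show "\<exists>!k. (k, v) \<in> T3" unfolding T3mem using v third_kind[OF d12[OF v]] by simp
    qed
  qed
  have d13: "kd T1 v \<noteq> kd T3 v" and d23: "kd T2 v \<noteq> kd T3 v" if "v \<in> V" for v
    using kd_in[OF tr3 that] T3mem by auto
  define c1 where "c1 = trans_col E T1"
  define c2 where "c2 = trans_col E T2"
  define c3 where "c3 = trans_col E T3"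
  have c1k: "c1 = (\<lambda>v. ias_col E (kd T1 v, v))" unfolding c1_def by (rule trans_col_kd)
  have c2k: "c2 = (\<lambda>v. ias_col E (kd T2 v, v))" unfolding c2_def by (rule trans_col_kd)
  have c3k: "c3 = (\<lambda>v. ias_col E (kd T3 v, v))" unfolding c3_def by (rule trans_col_kd)
  define r1 where "r1 = bin_rank V c1 V"
  define r2 where "r2 = bin_rank V c2 V"
  have r: "r1 + r2 = card V" using assms(5) rank_trans[OF tr1] rank_trans[OF tr2]
    unfolding r1_def r2_def c1_def c2_def by simp
  have cc1: "card (cycle_space V V c1) * 2 ^ r1 = 2 ^ card V" unfolding r1_def by (rule cycle_card[OF fV])
  have cc2: "card (cycle_space V V c2) * 2 ^ r2 = 2 ^ card V" unfolding r2_def by (rule cycle_card[OF fV])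
  let ?K1 = "cycle_space V V c1" let ?K2 = "cycle_space V V c2" let ?K3 = "cycle_space V V c3"
  let ?P1 = "cocycle_space V V c1" let ?P2 = "cocycle_space V V c2"
  have o12: "even (card (X \<inter> Y))" if "X \<in> ?K1" "Y \<in> ?K2" for X Y
    using that d12 unfolding c1k c2k by (intro ortho[OF fV sym]) auto
  have o21: "even (card (X \<inter> Y))" if "X \<in> ?K2" "Y \<in> ?K1" for X Y
    using that d12[THEN not_sym] unfolding c1k c2k by (intro ortho[OF fV sym]) auto
  have o13: "even (card (X \<inter> Y))" if "X \<in> ?K1" "Y \<in> ?K3" for X Y
    using that d13 unfolding c1k c3k by (intro ortho[OF fV sym]) auto
  have o23: "even (card (X \<inter> Y))" if "X \<in> ?K2" "Y \<in> ?K3" for X Y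
    using that d23 unfolding c2k c3k by (intro ortho[OF fV sym]) auto
  have s21: "?K2 \<subseteq> ?P1" unfolding cocycle_space_def using o12 cyc_sub by blast
  have s12: "?K1 \<subseteq> ?P2" unfolding cocycle_space_def using o21 cyc_sub by blast
  have e21: "?K2 = ?P1" using perp_eq[OF fV s21 cc1 cc2 r] .
  have e12: "?K1 = ?P2" using perp_eq[OF fV s12 cc2 cc1] r by simp
  have s31: "?K3 \<subseteq> ?K2" unfolding e21 cocycle_space_def using o13 cyc_sub by blast
  have s32: "?K3 \<subseteq> ?K1" unfolding e12 cocycle_space_def using o23 cyc_sub by blast
  have s123: "?K1 \<inter> ?K2 \<subseteq> ?K3"
  proof
    fix X assume X: "X \<in> ?K1 \<inter> ?K2"
    have XV: "X \<subseteq> V" using X cyc_sub by blast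
    have "(\<Sum>x\<in>X. c3 x r) = 0" if r: "r \<in> V" for r
    proof -
      have "(\<Sum>x\<in>X. c3 x r) = (\<Sum>x\<in>X. c1 x r + c2 x r)"
      proof (rule sum.cong[OF refl])
        fix x assume "x \<in> X" then have "x \<in> V" using XV by auto
        then show "c3 x r = c1 x r + c2 x r" unfolding c1k c2k c3k
          using d12 d13 d23 by (intro ias3) auto
      qed
      also have "\<dots> = (\<Sum>x\<in>X. c1 x r) + (\<Sum>x\<in>X. c2 x r)" by (rule sum.distrib)
      also have "\<dots> = 0" using X r unfolding cycle_space_def by auto
      finally show ?thesis .
    qed
    then show "X \<in> ?K3" using XV unfolding cycle_space_def by auto
  qed
  have b1: "bicycle_space V V c1 = ?K1 \<inter> ?K2" unfolding bicycle_space_def e21 ..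
  have b2: "bicycle_space V V c2 = ?K1 \<inter> ?K2" unfolding bicycle_space_def e12 by blast
  have "?K3 = ?K1 \<inter> ?K2" using s31 s32 s123 by blast
  then show ?thesis unfolding Let_def T3_def[symmetric] c1_def[symmetric] c2_def[symmetric]
      c3_def[symmetric] b1 b2 by simp
qed

end
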